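(* Let $n\geq 2$ and let $f:GL_n(R)\rightarrow\mathfrak{gl}_n(R)$ be a $\delta$-map which is a cocycle for the adjoint action, i.e. $f(g_1g_2)=f(g_1)+g_1f(g_2)g_1^{-1}$ for all $g_1,g_2\in GL_n(R)$, and assume $f$ is $\delta$-coherent. Then there exists $\nu\in R$ such that for all $g\in GL_n(R)$, $$f(g)=\nu\cdot\delta g\cdot g^{-1}.$$
   Context: $\delta$-algebraic setting: $R$ is a field of characteristic zero equipped with a derivation $\delta:R\rightarrow R$, and $R$ is $\delta$-closed (constrainedly closed in Kolchin's sense). $R^{\delta}=\{c\in R:\delta c=0\}$ is the field of constants. A map $f:GL_n(R)\rightarrow\mathfrak{gl}_n(R)$ is a $\delta$-map if there is $m$ and a matrix $F$ of polynomials with coefficients in $R$ in the entries of $x,x',\dots,x^{(m)}$ ($n\times n$ matrices of variables) and $\det(x)^{-1}$ such that $f(g)=F(g,\delta g,\dots,\delta^m g)$ for all $g$, with $\delta$ applied entrywise. $f$ is called $\delta$-coherent if for every algebraic subgroup $G\subset GL_n$ defined over $R^{\delta}$ (Zariski closed subgroup defined by polynomial equations with coefficients in $R^{\delta}$), with Lie algebra $L(G)\subset\mathfrak{gl}_n$, one has $f(G(R))\subset L(G)(R)$. *)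

theory Defs
  imports "HOL-Analysis.Analysis" "HOL-Library.Poly_Mapping"
begin

type_synonym ('v, 'a) mpoly = "('v \<Rightarrow>\<^sub>0 nat) \<Rightarrow>\<^sub>0 'a"

definition meval :: "('a::zero \<Rightarrow> 'b::comm_ring_1) \<Rightarrow> ('v, 'a) mpoly \<Rightarrow> ('v \<Rightarrow> 'b) \<Rightarrow> 'b" where
  "meval hom p x = (\<Sum>m\<in>Poly_Mapping.keys p. hom (Poly_Mapping.lookup p m) * (\<Prod>v\<in>Poly_Mapping.keys m. x v ^ Poly_Mapping.lookup m v))"

abbreviation mpeval :: "('v, 'a::comm_ring_1) mpoly \<Rightarrow> ('v \<Rightarrow> 'a) \<Rightarrow> 'a" where
  "mpeval p x \<equiv> meval (\<lambda>c. c) p x"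

definition mvars :: "('v, 'a::zero) mpoly \<Rightarrow> 'v set" where
  "mvars p = (\<Union>m\<in>Poly_Mapping.keys p. Poly_Mapping.keys m)"

definition is_derivation :: "('a::comm_ring_1 \<Rightarrow> 'a) \<Rightarrow> bool" where
  "is_derivation \<delta> \<longleftrightarrow> (\<forall>a b. \<delta> (a + b) = \<delta> a + \<delta> b) \<and> (\<forall>a b. \<delta> (a * b) = a * \<delta> b + \<delta> a * b)"

definition constants :: "('a \<Rightarrow> 'a::zero) \<Rightarrow> 'a set" where
  "constants \<delta> = {c. \<delta> c = 0}"

text \<open>Differential polynomials in one indeterminate y: polynomials in the variables
y, y', y'', ... (variable k stands for the k-th derivative of y).\<close>

definition dpeval :: "('a::comm_ring_1 \<Rightarrow> 'a) \<Rightarrow> (nat, 'a) mpoly \<Rightarrow> 'a \<Rightarrow> 'a" where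
  "dpeval \<delta> p a = mpeval p (\<lambda>k. (\<delta> ^^ k) a)"

text \<open>Order of a differential polynomial (-1 if no derivative of y occurs, i.e. p is
an element of the base field).\<close>

definition dord :: "(nat, 'a::zero) mpoly \<Rightarrow> int" where
  "dord p = (if mvars p = {} then -1 else int (Max (mvars p)))"

text \<open>Differentially closed (= constrainedly closed in Kolchin's sense, for one
derivation in characteristic zero), via Blum's axioms: for every nonconstant f and
nonzero g with ord g < ord f there is a in the field with f(a) = 0 and g(a) <> 0.\<close>

definition delta_closed :: "('a::field_char_0 \<Rightarrow> 'a) \<Rightarrow> bool" where
  "delta_closed \<delta> \<longleftrightarrow> is_derivation \<delta> \<and>
     (\<forall>f g :: (nat, 'a) mpoly. mvars f \<noteq> {} \<and> g \<noteq> 0 \<and> dord g < dord f \<longrightarrow>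
        (\<exists>a. dpeval \<delta> f a = 0 \<and> dpeval \<delta> g a \<noteq> 0))"

definition dmat :: "('a \<Rightarrow> 'a) \<Rightarrow> 'a^'n^'n \<Rightarrow> 'a^'n^'n" where
  "dmat \<delta> g = (\<chi> i j. \<delta> (g $ i $ j))"

text \<open>Variables: Some (d, i, j) stands for the (i,j) entry of the d-th derivative
of the matrix, None stands for det(x)^-1.\<close>

definition delta_map_eval :: "('a::field \<Rightarrow> 'a) \<Rightarrow> ((nat \<times> 'n::finite \<times> 'n) option, 'a) mpoly
     \<Rightarrow> 'a^'n^'n \<Rightarrow> 'a" where
  "delta_map_eval \<delta> P g = mpeval P (\<lambda>v. case v of None \<Rightarrow> inverse (det g)
                                             | Some (d, i, j) \<Rightarrow> (\<delta> ^^ d) (g $ i $ j))"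

definition is_delta_map :: "('a::field \<Rightarrow> 'a) \<Rightarrow> ('a^'n::finite^'n \<Rightarrow> 'a^'n^'n) \<Rightarrow> bool" where
  "is_delta_map \<delta> f \<longleftrightarrow>
     (\<exists>F :: 'n \<Rightarrow> 'n \<Rightarrow> ((nat \<times> 'n \<times> 'n) option, 'a) mpoly.
        \<forall>g. invertible g \<longrightarrow> (\<forall>i j. f g $ i $ j = delta_map_eval \<delta> (F i j) g))"

definition mat_eval :: "('n \<times> 'n, 'a::comm_ring_1) mpoly \<Rightarrow> 'a^'n^'n \<Rightarrow> 'a" where
  "mat_eval p g = mpeval p (\<lambda>(i, j). g $ i $ j)"

definition zero_set_GL :: "('n \<times> 'n, 'a::field) mpoly set \<Rightarrow> ('a^'n::finite^'n) set" where
  "zero_set_GL S = {g. invertible g \<and> (\<forall>p\<in>S. mat_eval p g = 0)}"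

definition is_subgroup_GL :: "('a::field^'n::finite^'n) set \<Rightarrow> bool" where
  "is_subgroup_GL G \<longleftrightarrow> G \<subseteq> {g. invertible g} \<and> mat 1 \<in> G \<and>
     (\<forall>g\<in>G. \<forall>h\<in>G. g ** h \<in> G) \<and> (\<forall>g\<in>G. matrix_inv g \<in> G)"

definition alg_subgroup_over_constants :: "('a::field \<Rightarrow> 'a) \<Rightarrow> ('a^'n::finite^'n) set \<Rightarrow> bool" where
  "alg_subgroup_over_constants \<delta> G \<longleftrightarrow>
     (\<exists>S. (\<forall>p\<in>S. \<forall>m. Poly_Mapping.lookup p m \<in> constants \<delta>) \<and> G = zero_set_GL S) \<and> is_subgroup_GL G"

text \<open>Differential at the identity of p in direction X: coefficient of t in
p(1 + t X).\<close>

definition diff_at_one :: "('n \<times> 'n, 'a::comm_ring_1) mpoly \<Rightarrow> 'a^'n^'n \<Rightarrow> 'a" where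
  "diff_at_one p X = coeff (meval (\<lambda>c. [:c:]) p (\<lambda>(i, j). [: mat 1 $ i $ j, X $ i $ j :])) 1"

definition lie_algebra :: "('a::field^'n::finite^'n) set \<Rightarrow> ('a^'n^'n) set" where
  "lie_algebra G = {X. \<forall>p. (\<forall>g\<in>G. mat_eval p g = 0) \<longrightarrow> diff_at_one p X = 0}"

definition delta_coherent :: "('a::field \<Rightarrow> 'a) \<Rightarrow> ('a^'n::finite^'n \<Rightarrow> 'a^'n^'n) \<Rightarrow> bool" where
  "delta_coherent \<delta> f \<longleftrightarrow>
     (\<forall>G. alg_subgroup_over_constants \<delta> G \<longrightarrow> f ` G \<subseteq> lie_algebra G)"

end

theory Submission
  imports Defs
begin


definition mon :: "('v \<Rightarrow>\<^sub>0 nat) \<Rightarrow> ('v \<Rightarrow> 'b::comm_ring_1) \<Rightarrow> 'b" where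
  "mon m x = (\<Prod>v\<in>Poly_Mapping.keys m. x v ^ Poly_Mapping.lookup m v)"

lemma meval_mon: "meval hom p x = (\<Sum>m\<in>Poly_Mapping.keys p. hom (Poly_Mapping.lookup p m) * mon m x)"
  by (simp add: meval_def mon_def)

lemma mon_superset:
  assumes "finite A" "Poly_Mapping.keys m \<subseteq> A"
  shows "mon m x = (\<Prod>v\<in>A. x v ^ Poly_Mapping.lookup m v)"
  unfolding mon_def
  by (rule prod.mono_neutral_left[OF assms(1,2)]) (auto simp: in_keys_iff)

lemma mon_add: "mon (m1 + m2) x = mon m1 x * mon m2 x"
proof -
  let ?A = "Poly_Mapping.keys m1 \<union> Poly_Mapping.keys m2"
  have f: "finite ?A" by simp
  have "Poly_Mapping.keys (m1 + m2) \<subseteq> ?A"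
    by (auto simp: in_keys_iff lookup_add)
  then have "mon (m1 + m2) x = (\<Prod>v\<in>?A. x v ^ Poly_Mapping.lookup (m1+m2) v)"
    using mon_superset f by blast
  also have "\<dots> = (\<Prod>v\<in>?A. x v ^ Poly_Mapping.lookup m1 v) * (\<Prod>v\<in>?A. x v ^ Poly_Mapping.lookup m2 v)"
    by (simp add: lookup_add power_add prod.distrib)
  also have "\<dots> = mon m1 x * mon m2 x"
    using mon_superset[OF f, of m1 x] mon_superset[OF f, of m2 x] by auto
  finally show ?thesis .
qed

lemma mon_zero[simp]: "mon 0 x = 1"
  by (simp add: mon_def)

lemma mon_single: "mon (Poly_Mapping.single v k) x = x v ^ k"
  by (cases "k = 0") (auto simp: mon_def)

definition rhom :: "('a::comm_ring_1 \<Rightarrow> 'b::comm_ring_1) \<Rightarrow> bool" where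
  "rhom h \<longleftrightarrow> h 0 = 0 \<and> h 1 = 1 \<and> (\<forall>a b. h (a + b) = h a + h b) \<and> (\<forall>a b. h (a * b) = h a * h b)"

lemma rhom_id: "rhom (\<lambda>c. c)" by (simp add: rhom_def)

lemma rhom_pCons: "rhom (\<lambda>c. [:c:])"
  by (simp add: rhom_def)

lemma rhom_single0: "rhom (\<lambda>c. Poly_Mapping.single 0 c)"
  by (simp add: rhom_def single_add mult_single)

lemma meval_superset:
  assumes "hom 0 = 0" "finite A" "Poly_Mapping.keys p \<subseteq> A"
  shows "meval hom p x = (\<Sum>m\<in>A. hom (Poly_Mapping.lookup p m) * mon m x)"
  unfolding meval_mon
  by (rule sum.mono_neutral_left[OF assms(2,3)]) (auto simp: in_keys_iff assms(1))

lemma meval_add: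
  assumes "rhom hom"
  shows "meval hom (p + q) x = meval hom p x + meval hom q x"
proof -
  let ?A = "Poly_Mapping.keys p \<union> Poly_Mapping.keys q"
  have f: "finite ?A" by simp
  have h0: "hom 0 = 0" and ha: "\<And>a b. hom (a+b) = hom a + hom b" using assms by (auto simp: rhom_def)
  have "Poly_Mapping.keys (p + q) \<subseteq> ?A"
    by (auto simp: in_keys_iff lookup_add)
  then have "meval hom (p + q) x = (\<Sum>m\<in>?A. hom (Poly_Mapping.lookup (p+q) m) * mon m x)"
    using meval_superset[where hom=hom, OF h0 f] by blast
  also have "\<dots> = (\<Sum>m\<in>?A. hom (Poly_Mapping.lookup p m) * mon m x) + (\<Sum>m\<in>?A. hom (Poly_Mapping.lookup q m) * mon m x)"
    by (simp add: lookup_add ha distrib_right sum.distrib)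
  also have "\<dots> = meval hom p x + meval hom q x"
    using meval_superset[where hom=hom and p=p and x=x, OF h0 f] meval_superset[where hom=hom and p=q and x=x, OF h0 f] by auto
  finally show ?thesis .
qed

lemma meval_zero[simp]: "meval hom 0 x = 0"
  by (simp add: meval_def)

lemma meval_sum:
  assumes "rhom hom"
  shows "meval hom (\<Sum>i\<in>I. p i) x = (\<Sum>i\<in>I. meval hom (p i) x)"
  by (induction I rule: infinite_finite_induct) (auto simp: meval_add[OF assms])

lemma meval_single:
  assumes "hom 0 = 0"
  shows "meval hom (Poly_Mapping.single m c) x = hom c * mon m x"
proof -
  have "meval hom (Poly_Mapping.single m c) x = (\<Sum>m'\<in>{m}. hom (Poly_Mapping.lookup (Poly_Mapping.single m c) m') * mon m' x)"
    by (rule meval_superset[where hom=hom, OF assms]) auto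
  then show ?thesis by simp
qed

lemma pm_expand: "p = (\<Sum>m\<in>Poly_Mapping.keys p. Poly_Mapping.single m (Poly_Mapping.lookup p m))"
  by (rule poly_mapping_eqI) (auto simp: lookup_sum lookup_single when_def in_keys_iff sum.delta' intro: sym)

lemma meval_mult:
  assumes "rhom hom"
  shows "meval hom (p * q) x = meval hom p x * meval hom q x"
proof -
  have h0: "hom 0 = 0" and hm: "\<And>a b. hom (a*b) = hom a * hom b" using assms by (auto simp: rhom_def)
  have "p * q = (\<Sum>m\<in>Poly_Mapping.keys p. Poly_Mapping.single m (Poly_Mapping.lookup p m)) *
      (\<Sum>m\<in>Poly_Mapping.keys q. Poly_Mapping.single m (Poly_Mapping.lookup q m))"
    using pm_expand[of p] pm_expand[of q] by simp
  also have "\<dots> = (\<Sum>m\<in>Poly_Mapping.keys p. \<Sum>m'\<in>Poly_Mapping.keys q.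
        Poly_Mapping.single (m + m') (Poly_Mapping.lookup p m * Poly_Mapping.lookup q m'))"
    by (simp add: sum_product mult_single)
  finally have eq: "p * q = \<dots>" .
  have "meval hom (p * q) x = (\<Sum>m\<in>Poly_Mapping.keys p. \<Sum>m'\<in>Poly_Mapping.keys q.
        hom (Poly_Mapping.lookup p m) * mon m x * (hom (Poly_Mapping.lookup q m') * mon m' x))"
    unfolding eq by (simp add: meval_sum[OF assms] meval_single[where hom=hom, OF h0] hm mon_add mult_ac)
  also have "\<dots> = meval hom p x * meval hom q x"
    by (simp add: meval_mon sum_product)
  finally show ?thesis .
qed

lemma meval_one:
  assumes "rhom hom"
  shows "meval hom 1 x = 1"
proof -
  have h: "hom 0 = 0" "hom 1 = 1" using assms by (auto simp: rhom_def)
  have "meval hom (Poly_Mapping.single 0 1) x = hom 1 * mon 0 x"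
    by (rule meval_single[where hom=hom, OF h(1)])
  then show ?thesis using h by simp
qed

lemma meval_prod:
  assumes "rhom hom"
  shows "meval hom (\<Prod>i\<in>I. p i) x = (\<Prod>i\<in>I. meval hom (p i) x)"
  by (induction I rule: infinite_finite_induct) (auto simp: meval_mult[OF assms] meval_one[OF assms])

lemma meval_power:
  assumes "rhom hom"
  shows "meval hom (p ^ k) x = meval hom p x ^ k"
  by (induction k) (auto simp: meval_mult[OF assms] meval_one[OF assms])

lemma rhom_uminus: "rhom hom \<Longrightarrow> hom (- a) = - hom a"
  unfolding rhom_def by (metis add.right_inverse add_eq_0_iff)

lemma meval_uminus:
  assumes "rhom hom"
  shows "meval hom (- p) x = - meval hom p x"
  by (simp add: meval_mon rhom_uminus[OF assms] sum_negf)

lemma meval_diff: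
  assumes "rhom hom"
  shows "meval hom (p - q) x = meval hom p x - meval hom q x"
  using meval_add[OF assms, of p "-q" x] meval_uminus[OF assms, of q x] by simp

definition Var :: "'v \<Rightarrow> ('v, 'a::comm_ring_1) mpoly" where
  "Var v = Poly_Mapping.single (Poly_Mapping.single v 1) 1"

definition Const :: "'a::comm_ring_1 \<Rightarrow> ('v, 'a) mpoly" where
  "Const c = Poly_Mapping.single 0 c"

lemma meval_Var: "rhom hom \<Longrightarrow> meval hom (Var v) x = x v"
  by (simp add: Var_def meval_single rhom_def mon_single)

lemma meval_Const: "rhom hom \<Longrightarrow> meval hom (Const c) x = hom c"
  by (simp add: Const_def meval_single rhom_def)

lemmas meval_simps = meval_add meval_mult meval_diff meval_uminus meval_power meval_Var meval_Const meval_one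

lemma meval_subst:
  "mpeval (meval (\<lambda>c. Poly_Mapping.single 0 c) P X) x = mpeval P (\<lambda>v. mpeval (X v) x)"
  unfolding meval_def[of "\<lambda>c. Poly_Mapping.single 0 c"]
  by (simp add: meval_sum[OF rhom_id] meval_mult[OF rhom_id] meval_prod[OF rhom_id]
      meval_power[OF rhom_id] meval_single meval_def[of "\<lambda>c. c" P])

lemma poly_meval:
  "poly (meval (\<lambda>c. [:c:]) P X) z = meval (\<lambda>c. c) P (\<lambda>v. poly (X v) z)"
  unfolding meval_def by (simp add: poly_sum poly_prod)



section \<open>Derivations\<close>

locale deriv =
  fixes \<delta> :: "'a::field_char_0 \<Rightarrow> 'a"
  assumes dadd: "\<delta> (a + b) = \<delta> a + \<delta> b"
    and dmult: "\<delta> (a * b) = a * \<delta> b + \<delta> a * b"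
begin

lemma d0[simp]: "\<delta> 0 = 0"
  using dadd[of 0 0] by simp

lemma d1[simp]: "\<delta> 1 = 0"
  using dmult[of 1 1] by simp

lemma duminus: "\<delta> (- a) = - \<delta> a"
  using dadd[of a "-a"] by (simp add: add_eq_0_iff)

lemma ddiff: "\<delta> (a - b) = \<delta> a - \<delta> b"
  using dadd[of a "-b"] duminus[of b] by simp

lemma dsum: "\<delta> (\<Sum>i\<in>I. f i) = (\<Sum>i\<in>I. \<delta> (f i))"
  by (induction I rule: infinite_finite_induct) (auto simp: dadd)

lemma dof_nat[simp]: "\<delta> (of_nat k) = 0"
  by (induction k) (auto simp: dadd)

lemma dconst_mult: "\<delta> c = 0 \<Longrightarrow> \<delta> (c * x) = c * \<delta> x"
  by (simp add: dmult)

lemma dpower: "\<delta> (x ^ Suc k) = of_nat (Suc k) * x ^ k * \<delta> x"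
proof (induction k)
  case 0 then show ?case by simp
next
  case (Suc k)
  have "\<delta> (x ^ Suc (Suc k)) = x * \<delta> (x ^ Suc k) + \<delta> x * x ^ Suc k"
    by (simp add: dmult)
  also have "\<dots> = of_nat (Suc (Suc k)) * x ^ Suc k * \<delta> x"
    using Suc by (simp add: algebra_simps)
  finally show ?case .
qed

lemma dinverse: "a \<noteq> 0 \<Longrightarrow> \<delta> (inverse a) = - \<delta> a / a^2"
proof -
  assume a: "a \<noteq> 0"
  have "0 = \<delta> (a * inverse a)" using a by simp
  also have "\<dots> = a * \<delta> (inverse a) + \<delta> a * inverse a" by (rule dmult)
  finally have "a * \<delta> (inverse a) = - (\<delta> a * inverse a)" by (simp add: add_eq_0_iff add.commute)
  then show ?thesis using a by (simp add: field_simps power2_eq_square)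
qed

lemma dconst_div: "\<delta> c = 0 \<Longrightarrow> \<delta> d = 0 \<Longrightarrow> \<delta> (c / d) = 0"
  by (cases "d = 0") (auto simp: divide_inverse dmult dinverse)

end

lemma deriv_of_is_derivation: "is_derivation \<delta> \<Longrightarrow> deriv \<delta>"
  by (simp add: is_derivation_def deriv_def)

lemma deriv_delta_closed: "delta_closed \<delta> \<Longrightarrow> deriv \<delta>"
  by (simp add: delta_closed_def deriv_of_is_derivation)

lemma (in deriv) kernel_poly:
  assumes t: "\<delta> t = 1"
  shows "(\<delta> ^^ N) a = 0 \<Longrightarrow> \<exists>c. (\<forall>k. \<delta> (c k) = 0) \<and> a = (\<Sum>k<N. c k * t ^ k)"
proof (induction N arbitrary: a)
  case 0
  then show ?case by (intro exI[of _ "\<lambda>_. 0"]) simp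
next
  case (Suc N)
  have "(\<delta> ^^ N) (\<delta> a) = 0" using Suc.prems by (simp add: funpow_Suc_right del: funpow.simps)
  then obtain c where c: "\<And>k. \<delta> (c k) = 0" and da: "\<delta> a = (\<Sum>k<N. c k * t ^ k)"
    using Suc.IH by blast
  define b where "b = (\<Sum>k<N. (c k / of_nat (Suc k)) * t ^ Suc k)"
  have db: "\<delta> b = (\<Sum>k<N. c k * t ^ k)"
    unfolding b_def dsum
  proof (rule sum.cong[OF refl])
    fix k
    have "\<delta> (c k / of_nat (Suc k) * t ^ Suc k) = c k / of_nat (Suc k) * \<delta> (t ^ Suc k)"
      by (rule dconst_mult, rule dconst_div[OF c dof_nat])
    also have "\<dots> = c k * t ^ k"
      by (simp only: dpower t) (simp del: of_nat_Suc)
    finally show "\<delta> (c k / of_nat (Suc k) * t ^ Suc k) = c k * t ^ k" .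
  qed
  define c' where "c' k = (if k = 0 then a - b else c (k - 1) / of_nat k)" for k
  have "\<forall>k. \<delta> (c' k) = 0"
    by (auto simp: c'_def ddiff da db dconst_div c)
  moreover have "a = (\<Sum>k<Suc N. c' k * t ^ k)"
    unfolding sum.lessThan_Suc_shift by (simp add: c'_def b_def)
  ultimately show ?case by blast
qed

lemma (in deriv) deriv_kills_poly:
  assumes E: "deriv E" and Et: "E t = 0" and Ec: "\<And>c. \<delta> c = 0 \<Longrightarrow> E c = 0"
    and c: "\<And>k. \<delta> (c k) = 0"
  shows "E (\<Sum>k<N. c k * t ^ k) = 0"
proof -
  interpret E: deriv E by (rule E)
  have p: "E (t ^ k) = 0" for k
    by (induction k) (auto simp: E.dmult Et)
  show ?thesis
    by (simp add: E.dsum E.dmult p Ec c)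
qed

section \<open>Blum consequences\<close>

lemma dpeval_Var: "dpeval \<delta> (Var k) a = (\<delta> ^^ k) a"
  by (simp add: dpeval_def meval_Var[OF rhom_id])

lemma dpeval_Const: "dpeval \<delta> (Const c) a = c"
  by (simp add: dpeval_def meval_Const[OF rhom_id])

lemma dpeval_diff: "dpeval \<delta> (p - q) a = dpeval \<delta> p a - dpeval \<delta> q a"
  by (simp add: dpeval_def meval_diff[OF rhom_id])

lemma dpeval_mult: "dpeval \<delta> (p * q) a = dpeval \<delta> p a * dpeval \<delta> q a"
  by (simp add: dpeval_def meval_mult[OF rhom_id])

lemma mvars_Var: "mvars (Var k :: (nat, 'a::comm_ring_1) mpoly) = {k}"
  by (simp add: mvars_def Var_def)

lemma dord_Var: "dord (Var k :: (nat, 'a::comm_ring_1) mpoly) = int k"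
  by (simp add: dord_def mvars_Var)

lemma finite_mvars: "finite (mvars p)"
  by (simp add: mvars_def)

lemma Const_nonzero: "c \<noteq> 0 \<Longrightarrow> Const c \<noteq> 0"
  by (metis Const_def lookup_single_eq lookup_zero)

lemma mvars_Const: "mvars (Const c) = {}"
  by (simp add: mvars_def Const_def)

lemma single_nonzero: "v \<noteq> 0 \<Longrightarrow> Poly_Mapping.single k v \<noteq> 0"
  by (metis lookup_single_eq lookup_zero)

lemma ex_t:
  assumes "delta_closed \<delta>"
  shows "\<exists>t. \<delta> t = 1"
proof -
  let ?f = "Var 1 - Const 1 :: (nat, 'a) mpoly"
  let ?g = "Const 1 :: (nat, 'a) mpoly"
  have lk: "Poly_Mapping.lookup ?f (Poly_Mapping.single 1 1) = 1"
    by (simp add: Var_def Const_def lookup_minus lookup_single lookup_one single_nonzero)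
  have "Poly_Mapping.single (1::nat) (1::nat) \<in> Poly_Mapping.keys ?f"
    using lk by (simp add: in_keys_iff)
  then have "1 \<in> mvars ?f" by (force simp: mvars_def)
  moreover have "mvars ?f \<subseteq> {1}"
    by (auto simp: mvars_def Var_def Const_def in_keys_iff lookup_minus lookup_single lookup_one when_def split: if_splits)
  ultimately have mv: "mvars ?f = {1}" by blast
  have "dord ?g < dord ?f"
    unfolding dord_def mv by (simp add: mvars_Const)
  moreover have "?g \<noteq> 0" by (simp add: Const_nonzero)
  ultimately obtain a where "dpeval \<delta> ?f a = 0"
    using assms mv unfolding delta_closed_def by blast
  then show ?thesis by (auto simp: dpeval_diff dpeval_Var dpeval_Const)
qed

lemma blum_zero:
  assumes "delta_closed \<delta>"
    and van: "\<And>N a. (\<delta> ^^ N) a = 0 \<Longrightarrow> dpeval \<delta> Q a = 0"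
  shows "Q = 0"
proof (rule ccontr)
  assume Q: "Q \<noteq> 0"
  define N where "N = Suc (Max (insert 0 (mvars Q)))"
  have "dord Q < int N"
  proof (cases "mvars Q = {}")
    case False
    have "Max (mvars Q) \<le> Max (insert 0 (mvars Q))"
      using False finite_mvars by (intro Max_mono) auto
    then show ?thesis using False by (simp add: dord_def N_def)
  qed (simp add: dord_def)
  then have "dord Q < dord (Var N :: (nat, 'a) mpoly)" by (simp add: dord_Var)
  with Q assms(1) obtain a where "dpeval \<delta> (Var N) a = 0" "dpeval \<delta> Q a \<noteq> 0"
    unfolding delta_closed_def by (metis mvars_Var empty_not_insert)
  then show False using van by (simp add: dpeval_Var)
qed

lemma (in deriv) const_vanish:
  assumes D: "deriv D" and Q: "\<And>a. D a = dpeval \<delta> Q a" and c: "\<delta> c = 0"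
  shows "D c = 0"
proof -
  interpret D: deriv D by (rule D)
  define q where "q = meval (\<lambda>c. [:c:]) Q (\<lambda>k. if k = 0 then [:0,1:] else 0)"
  have dk: "(\<delta> ^^ k) c = (if k = 0 then c else 0)" for k
    by (induction k) (auto simp: c)
  have qc: "D z = poly q z" if "\<delta> z = 0" for z
  proof -
    have dk: "(\<delta> ^^ k) z = (if k = 0 then z else 0)" for k
      by (induction k) (auto simp: that)
    have "D z = mpeval Q (\<lambda>k. poly (if k = 0 then [:0,1:] else 0) z)"
      unfolding Q dpeval_def by (rule arg_cong[of _ _ "mpeval Q"]) (auto simp: dk)
    then show ?thesis by (simp add: q_def poly_meval)
  qed
  show ?thesis
  proof (cases "c = 0")
    case True then show ?thesis by simp
  next
    case False
    define r where "r = pcompose q [:0, c:] - [:0, D c:]"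
    have roots: "poly r (of_nat k) = 0" for k
    proof -
      have "poly r (of_nat k) = poly q (c * of_nat k) - of_nat k * D c"
        by (simp add: r_def poly_pcompose mult.commute)
      also have "poly q (c * of_nat k) = D (c * of_nat k)"
        by (rule qc[symmetric]) (simp add: dmult c)
      also have "\<dots> = of_nat k * D c"
        by (simp add: D.dmult mult.commute)
      finally show ?thesis by simp
    qed
    have "r = 0"
    proof (rule ccontr)
      assume "r \<noteq> 0"
      then have "finite {x. poly r x = 0}" by (rule poly_roots_finite)
      moreover have "range (of_nat :: nat \<Rightarrow> 'a) \<subseteq> {x. poly r x = 0}" using roots by auto
      ultimately have "finite (range (of_nat :: nat \<Rightarrow> 'a))" by (rule finite_subset[rotated])
      then show False using range_inj_infinite[OF inj_of_nat] by blast
    qed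
    then have "poly r (inverse c) = 0" by simp
    then have "poly q 1 = inverse c * D c"
      using False by (simp add: r_def poly_pcompose)
    moreover have "poly q 1 = 0" using qc[of 1] by simp
    ultimately show ?thesis using False by simp
  qed
qed

section \<open>Polynomial derivations are multiples of delta\<close>

lemma poly_derivation:
  assumes cl: "delta_closed \<delta>" and D: "deriv D" and Q: "\<And>a. D a = dpeval \<delta> Q a"
  shows "\<exists>\<nu>. \<forall>a. D a = \<nu> * \<delta> a"
proof -
  interpret deriv \<delta> by (rule deriv_delta_closed[OF cl])
  interpret D: deriv D by (rule D)
  obtain t where t: "\<delta> t = 1" using ex_t[OF cl] by blast
  define \<nu> where "\<nu> = D t"
  define E where "E a = D a - \<nu> * \<delta> a" for a
  have E: "deriv E"
    by unfold_locales (auto simp: E_def D.dadd dadd D.dmult dmult algebra_simps)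
  have Et: "E t = 0" by (simp add: E_def \<nu>_def t)
  have Ec: "E c = 0" if "\<delta> c = 0" for c
    using const_vanish[OF D Q that] that by (simp add: E_def)
  define Q' where "Q' = Q - Const \<nu> * Var 1"
  have Q': "dpeval \<delta> Q' a = E a" for a
    by (simp add: Q'_def dpeval_diff dpeval_mult dpeval_Const dpeval_Var E_def Q)
  have "Q' = 0"
  proof (rule blum_zero[OF cl])
    fix N a assume "(\<delta> ^^ N) a = 0"
    then obtain c where c: "\<And>k. \<delta> (c k) = 0" and a: "a = (\<Sum>k<N. c k * t ^ k)"
      using kernel_poly[OF t] by blast
    show "dpeval \<delta> Q' a = 0"
      unfolding Q' a by (rule deriv_kills_poly[OF E Et Ec c])
  qed
  then have "E a = 0" for a using Q'[of a] by (simp add: dpeval_def)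
  then show ?thesis by (auto simp: E_def)
qed



section \<open>Sparse matrix algebra\<close>

definition Em :: "'n::finite \<Rightarrow> 'n \<Rightarrow> 'a::field^'n^'n" where
  "Em i j = (\<chi> a b. if a = i \<and> b = j then 1 else 0)"

definition sm :: "'a::field \<Rightarrow> 'a^'n::finite^'n \<Rightarrow> 'a^'n^'n" where
  "sm c A = (\<chi> a b. c * A $ a $ b)"

definition sh :: "'n::finite \<Rightarrow> 'n \<Rightarrow> 'a::field \<Rightarrow> 'a^'n^'n" where
  "sh i j s = (\<chi> a b. if a = i \<and> b = j then s else if a = b then 1 else 0)"

lemma Em_nth[simp]: "Em i j $ a $ b = (if a = i \<and> b = j then 1 else 0)"
  by (simp add: Em_def)

lemma sm_nth[simp]: "sm c A $ a $ b = c * A $ a $ b"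
  by (simp add: sm_def)

lemma sh_nth: "sh i j s $ a $ b = (if a = i \<and> b = j then s else if a = b then 1 else 0)"
  by (simp add: sh_def)

lemma mat1_nth[simp]: "(mat 1 :: 'a::field^'n::finite^'n) $ a $ b = (if a = b then 1 else 0)"
  by (simp add: mat_def)

lemma sum_single_index:
  fixes F :: "'n::finite \<Rightarrow> 'a::comm_monoid_add"
  assumes "\<And>c. c \<noteq> k \<Longrightarrow> F c = 0"
  shows "(\<Sum>c\<in>UNIV. F c) = F k"
  using assms by (subst sum.remove[of _ k]) (auto intro!: sum.neutral)

lemma Em_mult: "(Em a b ** Em c d :: 'a::field^'n::finite^'n) = (if b = c then Em a d else 0)"
proof -
  have "(Em a b ** Em c d :: 'a::field^'n::finite^'n) $ x $ y = (if b = c then Em a d else 0) $ x $ y" for x y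
  proof -
    have "(Em a b ** Em c d :: 'a::field^'n::finite^'n) $ x $ y = (\<Sum>k\<in>UNIV. Em a b $ x $ k * Em c d $ k $ y)"
      by (simp add: matrix_matrix_mult_def)
    also have "\<dots> = Em a b $ x $ b * Em c d $ b $ y"
      by (rule sum_single_index) auto
    finally show ?thesis by auto
  qed
  then show ?thesis by (simp add: vec_eq_iff)
qed

lemma Em_mult_assoc: "(Em a b ** (Em c d ** X) :: 'a::field^'n::finite^'n) = (if b = c then Em a d ** X else 0)"
  by (simp add: matrix_mul_assoc Em_mult)

lemma sm_mult_left: "sm c A ** B = sm c (A ** B)"
  by (simp add: vec_eq_iff matrix_matrix_mult_def sum_distrib_left mult.assoc)

lemma sm_mult_right: "A ** sm c B = sm c (A ** B)"
  by (simp add: vec_eq_iff matrix_matrix_mult_def sum_distrib_left mult_ac)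

lemma sm_sm[simp]: "sm c (sm d A) = sm (c * d) A"
  by (simp add: vec_eq_iff mult.assoc)

lemma sm_add: "sm c (A + B) = sm c A + sm c B"
  by (simp add: vec_eq_iff algebra_simps)

lemma sm_diff: "sm c (A - B) = sm c A - sm c B"
  by (simp add: vec_eq_iff algebra_simps)

lemma sm_uminus: "sm c (- A) = - sm c A"
  by (simp add: vec_eq_iff algebra_simps)

lemma sm_zero[simp]: "sm c 0 = 0" "sm 0 A = 0"
  by (simp_all add: vec_eq_iff)

lemma sm_plus_scalar: "sm c A + sm d A = sm (c + d) A"
  by (simp add: vec_eq_iff algebra_simps)

lemma sm_one[simp]: "sm 1 A = A"
  by (simp add: vec_eq_iff)

lemma mat_sm: "(mat c :: 'a::field^'n::finite^'n) ** A = sm c A"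
proof -
  have "(mat c ** A) $ x $ y = sm c A $ x $ y" for x y
  proof -
    have "(mat c ** A) $ x $ y = (\<Sum>k\<in>UNIV. mat c $ x $ k * A $ k $ y)"
      by (simp add: matrix_matrix_mult_def)
    also have "\<dots> = mat c $ x $ x * A $ x $ y"
      by (rule sum_single_index) (auto simp: mat_def)
    finally show ?thesis by (simp add: mat_def)
  qed
  then show ?thesis by (simp add: vec_eq_iff)
qed

lemma matrix_add_rdistrib: "((B + C) ** A) = (B ** A) + (C ** A :: 'a::field^'n::finite^'n)"
  by (vector matrix_matrix_mult_def sum.distrib[symmetric] field_simps)

lemma matrix_diff_ldistrib: "(A ** (B - C)) = (A ** B) - (A ** C :: 'a::field^'n::finite^'n)"
  by (vector matrix_matrix_mult_def sum_subtractf[symmetric] field_simps)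

lemma matrix_diff_rdistrib: "((B - C) ** A) = (B ** A) - (C ** A :: 'a::field^'n::finite^'n)"
  by (vector matrix_matrix_mult_def sum_subtractf[symmetric] field_simps)

lemma matrix_uminus_left: "(- B) ** A = - (B ** A :: 'a::field^'n::finite^'n)"
  by (vector matrix_matrix_mult_def sum_negf[symmetric])

lemma matrix_uminus_right: "A ** (- B) = - (A ** B :: 'a::field^'n::finite^'n)"
  by (vector matrix_matrix_mult_def sum_negf[symmetric])

lemma sh_off: "i \<noteq> j \<Longrightarrow> (sh i j s :: 'a::field^'n::finite^'n) = mat 1 + sm s (Em i j)"
  by (auto simp: vec_eq_iff sh_nth)

lemma sh_diag: "(sh i i t :: 'a::field^'n::finite^'n) = mat 1 + sm (t - 1) (Em i i)"
  by (auto simp: vec_eq_iff sh_nth)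

lemmas ring_mat = matrix_add_ldistrib matrix_add_rdistrib matrix_diff_ldistrib matrix_diff_rdistrib
  matrix_uminus_left matrix_uminus_right sm_mult_left sm_mult_right Em_mult Em_mult_assoc
  sm_add sm_diff sm_uminus matrix_mul_assoc[symmetric]

lemma inv_unique:
  fixes A B :: "'a::field^'n::finite^'n"
  assumes "A ** B = mat 1"
  shows "matrix_inv A = B" "invertible A"
proof -
  have BA: "B ** A = mat 1" using assms matrix_left_right_inverse by blast
  show inv: "invertible A" using assms BA by (auto simp: invertible_def)
  have "A ** matrix_inv A = mat 1 \<and> matrix_inv A ** A = mat 1"
    unfolding matrix_inv_def by (rule someI[of _ B]) (use assms BA in auto)
  then have "matrix_inv A = matrix_inv A ** (A ** B)" by (simp add: assms)
  also have "\<dots> = B" using \<open>A ** matrix_inv A = mat 1 \<and> matrix_inv A ** A = mat 1\<close>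
    by (simp add: matrix_mul_assoc)
  finally show "matrix_inv A = B" .
qed

lemma inv_props:
  fixes A :: "'a::field^'n::finite^'n"
  assumes "invertible A"
  shows "A ** matrix_inv A = mat 1" "matrix_inv A ** A = mat 1"
proof -
  obtain B where "A ** B = mat 1" using assms invertible_right_inverse by blast
  then show "A ** matrix_inv A = mat 1" "matrix_inv A ** A = mat 1"
    using inv_unique matrix_left_right_inverse by metis+
qed

lemma inv_mult:
  fixes A B :: "'a::field^'n::finite^'n"
  assumes "invertible A" "invertible B"
  shows "matrix_inv (A ** B) = matrix_inv B ** matrix_inv A"
proof (rule inv_unique)
  have "A ** B ** (matrix_inv B ** matrix_inv A) = A ** (B ** matrix_inv B) ** matrix_inv A"
    by (simp add: matrix_mul_assoc)
  then show "A ** B ** (matrix_inv B ** matrix_inv A) = mat 1"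
    using inv_props[OF assms(1)] inv_props[OF assms(2)] by simp
qed

lemma invertible_mult_iff:
  fixes A B :: "'a::field^'n::finite^'n"
  shows "invertible (A ** B) \<longleftrightarrow> invertible A \<and> invertible B"
  by (simp add: invertible_det_nz det_mul)

lemma sh_off_mult: "i \<noteq> j \<Longrightarrow> (sh i j s ** sh i j s' :: 'a::field^'n::finite^'n) = sh i j (s + s')"
  by (simp add: sh_off ring_mat algebra_simps sm_plus_scalar)

lemma sh_diag_mult: "(sh i i s ** sh i i s' :: 'a::field^'n::finite^'n) = sh i i (s * s')"
proof -
  have "(sh i i s ** sh i i s' :: 'a::field^'n::finite^'n) = mat 1 + sm (s - 1) (Em i i) + sm (s' - 1) (Em i i) + sm ((s - 1) * (s' - 1)) (Em i i)"
    by (simp add: sh_diag ring_mat algebra_simps)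
  also have "\<dots> = mat 1 + sm (s * s' - 1) (Em i i)"
    by (simp add: vec_eq_iff algebra_simps)
  finally show ?thesis by (simp add: sh_diag)
qed

lemma sh_zero_id: "i \<noteq> j \<Longrightarrow> sh i j 0 = (mat 1 :: 'a::field^'n::finite^'n)"
  by (simp add: sh_off)

lemma sh_one_id: "sh i i 1 = (mat 1 :: 'a::field^'n::finite^'n)"
  by (simp add: sh_diag)

lemma sh_off_inv: "i \<noteq> j \<Longrightarrow> matrix_inv (sh i j s :: 'a::field^'n::finite^'n) = sh i j (- s)"
  "i \<noteq> j \<Longrightarrow> invertible (sh i j s :: 'a::field^'n::finite^'n)"
  using inv_unique[of "sh i j s" "sh i j (-s)"] by (simp_all add: sh_off_mult sh_zero_id)

lemma sh_diag_inv: "t \<noteq> 0 \<Longrightarrow> matrix_inv (sh i i t :: 'a::field^'n::finite^'n) = sh i i (inverse t)"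
  "t \<noteq> 0 \<Longrightarrow> invertible (sh i i t :: 'a::field^'n::finite^'n)"
  using inv_unique[of "sh i i t" "sh i i (inverse t)"] by (simp_all add: sh_diag_mult sh_one_id)

lemma det_sh_off: "i \<noteq> j \<Longrightarrow> det (sh i j s :: 'a::field^'n::finite^'n) = 1"
proof -
  assume ij: "i \<noteq> j"
  have "sh i j s = (\<chi> k. if k = i then row i (mat 1) + s *s row j (mat 1) else row k (mat 1 :: 'a^'n^'n))"
    using ij by (auto simp: vec_eq_iff sh_nth row_def)
  then show ?thesis using det_row_operation[OF ij, of "mat 1" s] by simp
qed



lemma mat_eval_simps:
  "mat_eval (p + q) g = mat_eval p g + mat_eval q g"
  "mat_eval (p - q) g = mat_eval p g - mat_eval q g"
  "mat_eval (p * q) g = mat_eval p g * mat_eval q g"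
  "mat_eval (p ^ k) g = mat_eval p g ^ k"
  "mat_eval (Var (a, b)) g = g $ a $ b"
  "mat_eval (Const c) g = c"
  "mat_eval 1 g = 1"
  by (simp_all add: mat_eval_def meval_simps rhom_id)

definition ev1 :: "'a::field^'n::finite^'n \<Rightarrow> 'n \<times> 'n \<Rightarrow> 'a poly" where
  "ev1 X = (\<lambda>(i, j). [: mat 1 $ i $ j, X $ i $ j :])"

definition pev :: "('n \<times> 'n, 'a::field) mpoly \<Rightarrow> 'a^'n::finite^'n \<Rightarrow> 'a poly" where
  "pev p X = meval (\<lambda>c. [:c:]) p (ev1 X)"

lemma diff_pev: "diff_at_one p X = coeff (pev p X) 1"
  by (simp add: diff_at_one_def pev_def ev1_def)

lemma pev_simps:
  "pev (p + q) X = pev p X + pev q X"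
  "pev (p - q) X = pev p X - pev q X"
  "pev (p * q) X = pev p X * pev q X"
  "pev (p ^ k) X = pev p X ^ k"
  "pev (Var (a, b)) X = [: mat 1 $ a $ b, X $ a $ b :]"
  "pev (Const c) X = [:c:]"
  "pev 1 X = 1"
  by (simp_all add: pev_def meval_simps rhom_pCons ev1_def)

lemma lie_van:
  assumes "X \<in> lie_algebra G" "\<And>g. g \<in> G \<Longrightarrow> mat_eval p g = 0"
  shows "coeff (pev p X) 1 = 0"
  using assms by (auto simp: lie_algebra_def diff_pev)

definition ccoef :: "('a::field \<Rightarrow> 'a) \<Rightarrow> ('v, 'a) mpoly \<Rightarrow> bool" where
  "ccoef \<delta> p \<longleftrightarrow> (\<forall>m. \<delta> (Poly_Mapping.lookup p m) = 0)"

context deriv begin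

lemma ccoef_add: "ccoef \<delta> p \<Longrightarrow> ccoef \<delta> q \<Longrightarrow> ccoef \<delta> (p + q)"
  by (simp add: ccoef_def lookup_add dadd)

lemma ccoef_diff: "ccoef \<delta> p \<Longrightarrow> ccoef \<delta> q \<Longrightarrow> ccoef \<delta> (p - q)"
  by (simp add: ccoef_def lookup_minus ddiff)

lemma ccoef_single: "\<delta> c = 0 \<Longrightarrow> ccoef \<delta> (Poly_Mapping.single m c)"
  by (simp add: ccoef_def lookup_single when_def)

lemma ccoef_sum: "(\<And>i. i \<in> I \<Longrightarrow> ccoef \<delta> (p i)) \<Longrightarrow> ccoef \<delta> (\<Sum>i\<in>I. p i)"
  by (simp add: ccoef_def lookup_sum dsum)

lemma ccoef_mult: "ccoef \<delta> p \<Longrightarrow> ccoef \<delta> q \<Longrightarrow> ccoef \<delta> (p * q)"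
proof -
  assume p: "ccoef \<delta> p" and q: "ccoef \<delta> q"
  have "p * q = (\<Sum>m\<in>Poly_Mapping.keys p. \<Sum>m'\<in>Poly_Mapping.keys q.
        Poly_Mapping.single (m + m') (Poly_Mapping.lookup p m * Poly_Mapping.lookup q m'))"
    by (subst pm_expand[of p], subst pm_expand[of q]) (simp add: sum_product mult_single)
  also have "ccoef \<delta> \<dots>"
    using p q by (intro ccoef_sum ccoef_single) (simp add: ccoef_def dmult)
  finally show ?thesis .
qed

lemma ccoef_Var: "ccoef \<delta> (Var v)"
  by (simp add: Var_def ccoef_single)

lemma ccoef_Const: "\<delta> c = 0 \<Longrightarrow> ccoef \<delta> (Const c)"
  by (simp add: Const_def ccoef_single)

lemma ccoef_one: "ccoef \<delta> 1"
  using ccoef_Const[of 1] by (simp add: Const_def)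

lemma ccoef_power: "ccoef \<delta> p \<Longrightarrow> ccoef \<delta> (p ^ k)"
  by (induction k) (auto simp: ccoef_mult ccoef_one)

end

lemma alg_subgroupI:
  assumes "\<And>p. p \<in> S \<Longrightarrow> ccoef \<delta> p" "G = zero_set_GL S" "is_subgroup_GL G"
  shows "alg_subgroup_over_constants \<delta> G"
  using assms unfolding alg_subgroup_over_constants_def ccoef_def constants_def by blast

section \<open>One-entry groups\<close>

definition Sk :: "'n \<Rightarrow> 'n \<Rightarrow> ('n \<times> 'n, 'a::field) mpoly set" where
  "Sk k l = {Var (a, b) - Const (if a = b then 1 else 0) | a b. (a, b) \<noteq> (k, l)}"

lemma zero_set_Sk:
  "zero_set_GL (Sk k l) = {g :: 'a::field^'n::finite^'n. invertible g \<and> (\<forall>a b. (a, b) \<noteq> (k, l) \<longrightarrow> g $ a $ b = (if a = b then 1 else 0))}"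
proof (rule set_eqI, rule iffI)
  fix g :: "'a::field^'n::finite^'n"
  assume g: "g \<in> zero_set_GL (Sk k l)"
  have "g $ a $ b = (if a = b then 1 else 0)" if "(a, b) \<noteq> (k, l)" for a b
  proof -
    have "Var (a, b) - Const (if a = b then 1 else 0) \<in> Sk k l"
      using that unfolding Sk_def by blast
    then have "mat_eval (Var (a, b) - Const (if a = b then 1 else 0)) g = 0"
      using g unfolding zero_set_GL_def by blast
    then show ?thesis by (simp add: mat_eval_simps)
  qed
  then show "g \<in> {g. invertible g \<and> (\<forall>a b. (a, b) \<noteq> (k, l) \<longrightarrow> g $ a $ b = (if a = b then 1 else 0))}"
    using g unfolding zero_set_GL_def by blast
next
  fix g :: "'a::field^'n::finite^'n"
  assume g: "g \<in> {g. invertible g \<and> (\<forall>a b. (a, b) \<noteq> (k, l) \<longrightarrow> g $ a $ b = (if a = b then 1 else 0))}"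
  show "g \<in> zero_set_GL (Sk k l)"
    unfolding zero_set_GL_def Sk_def
  proof (intro CollectI conjI ballI)
    show "invertible g" using g by blast
  next
    fix p :: "('n \<times> 'n, 'a) mpoly" assume "p \<in> {Var (a, b) - Const (if a = b then 1 else 0) |a b. (a, b) \<noteq> (k, l)}"
    then obtain a b where "p = Var (a, b) - Const (if a = b then 1 else 0)" "(a, b) \<noteq> (k, l)" by blast
    then show "mat_eval p g = 0" using g by (simp add: mat_eval_simps)
  qed
qed

lemma sh_char:
  assumes "\<forall>a b. (a, b) \<noteq> (k, l) \<longrightarrow> g $ a $ b = (if a = b then 1 else 0)"
  shows "g = sh k l (g $ k $ l)"
  using assms by (auto simp: vec_eq_iff sh_nth)

lemma sh_in_Sk:
  "(\<forall>a b. (a, b) \<noteq> (k, l) \<longrightarrow> sh k l s $ a $ b = (if a = b then (1::'a::field) else 0))"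
  by (auto simp: sh_nth)

lemma sh_diag_invertible_iff: "invertible (sh i i t :: 'a::field^'n::finite^'n) \<longleftrightarrow> t \<noteq> 0"
proof
  assume inv: "invertible (sh i i t :: 'a::field^'n::finite^'n)"
  show "t \<noteq> 0"
  proof
    assume t: "t = 0"
    have "row i (sh i i t :: 'a::field^'n::finite^'n) = 0"
      using t by (auto simp: row_def vec_eq_iff sh_nth)
    then have "det (sh i i t :: 'a::field^'n::finite^'n) = 0" by (rule det_zero_row(2))
    then show False using inv by (simp add: invertible_det_nz)
  qed
qed (rule sh_diag_inv(2))

lemma mem_Sk: "g \<in> zero_set_GL (Sk k l) \<longleftrightarrow> invertible g \<and> (\<exists>s. g = sh k l s)"
proof
  assume "g \<in> zero_set_GL (Sk k l)"
  then have "invertible g" "\<forall>a b. (a, b) \<noteq> (k, l) \<longrightarrow> g $ a $ b = (if a = b then 1 else 0)"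
    unfolding zero_set_Sk by auto
  then show "invertible g \<and> (\<exists>s. g = sh k l s)"
    using sh_char by blast
next
  assume g: "invertible g \<and> (\<exists>s. g = sh k l s)"
  then obtain s where gs: "g = sh k l s" by blast
  have "\<forall>a b. (a, b) \<noteq> (k, l) \<longrightarrow> g $ a $ b = (if a = b then 1 else 0)"
    unfolding gs by (rule sh_in_Sk)
  then show "g \<in> zero_set_GL (Sk k l)"
    unfolding zero_set_Sk using g by blast
qed

lemma sh_mem_Sk: "invertible (sh k l s) \<Longrightarrow> sh k l s \<in> zero_set_GL (Sk k l)"
  unfolding mem_Sk by blast

lemma subgroup_Sk_1: "zero_set_GL (Sk k l) \<subseteq> {g :: 'a::field^'n::finite^'n. invertible g}"
    unfolding zero_set_GL_def by blast

lemma subgroup_Sk_2: "(mat 1 :: 'a::field^'n::finite^'n) \<in> zero_set_GL (Sk k l)"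
proof -
  have "mat 1 = (sh k l (if k = l then 1 else 0) :: 'a::field^'n::finite^'n)"
    by (cases "k = l") (simp_all add: sh_zero_id sh_one_id)
  moreover have "invertible (mat 1 :: 'a::field^'n::finite^'n)"
    by (rule inv_unique(2)) simp
  ultimately show ?thesis
    by (metis sh_mem_Sk)
qed

lemma subgroup_Sk_3: fixes g h :: "'a::field^'n::finite^'n"
  assumes g: "g \<in> zero_set_GL (Sk k l)" and h: "h \<in> zero_set_GL (Sk k l)"
  shows "g ** h \<in> zero_set_GL (Sk k l)"
proof -
  have gi: "invertible g" and hi: "invertible h" and g': "\<exists>s. g = sh k l s" and h': "\<exists>s. h = sh k l s"
    using g h unfolding mem_Sk by auto
  then obtain s s' where gs: "g = sh k l s" and hs: "h = sh k l s'" by blast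
  have "invertible (g ** h)" using gi hi by (simp add: invertible_mult)
  moreover have "g ** h = sh k l (if k = l then s * s' else s + s')"
    unfolding gs hs by (cases "k = l") (simp_all add: sh_diag_mult sh_off_mult)
  ultimately show ?thesis
    by (metis sh_mem_Sk)
qed

lemma subgroup_Sk_4: fixes g :: "'a::field^'n::finite^'n"
  assumes g: "g \<in> zero_set_GL (Sk k l)"
  shows "matrix_inv g \<in> zero_set_GL (Sk k l)"
proof -
  have gi: "invertible g" and g': "\<exists>s. g = sh k l s"
    using g unfolding mem_Sk by auto
  then obtain s where gs: "g = sh k l s" by blast
  have "matrix_inv g = sh k l (if k = l then inverse s else - s) \<and> invertible (sh k l (if k = l then inverse s else - s))"
  proof (cases "k = l")
    case True
    have "invertible (sh k k s)" using gi gs True by simp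
    then have s: "s \<noteq> 0" by (simp add: sh_diag_invertible_iff)
    show ?thesis using s True by (simp add: gs sh_diag_inv sh_diag_invertible_iff)
  next
    case False
    then show ?thesis by (simp add: gs sh_off_inv)
  qed
  then show ?thesis
    using sh_mem_Sk[of k l "if k = l then inverse s else - s"] by simp
qed

lemma subgroup_Sk: "is_subgroup_GL (zero_set_GL (Sk k l) :: ('a::field^'n::finite^'n) set)"
  unfolding is_subgroup_GL_def
  using subgroup_Sk_1 subgroup_Sk_2 subgroup_Sk_3 subgroup_Sk_4 by blast

lemma (in deriv) alg_Sk: "alg_subgroup_over_constants \<delta> (zero_set_GL (Sk k l) :: ('a^'n::finite^'n) set)"
proof (rule alg_subgroupI[OF _ refl subgroup_Sk])
  fix p :: "('n \<times> 'n, 'a) mpoly" assume "p \<in> Sk k l"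
  then obtain a b where p: "p = Var (a, b) - Const (if a = b then 1 else 0)"
    unfolding Sk_def by blast
  show "ccoef \<delta> p" unfolding p
    by (intro ccoef_diff ccoef_Var ccoef_Const) simp
qed

lemma (in deriv) coh_sh:
  assumes coh: "delta_coherent \<delta> f" and inv: "invertible (sh k l s :: 'a^'n::finite^'n)"
    and ab: "(a, b) \<noteq> (k, l)"
  shows "f (sh k l s) $ a $ b = 0"
proof -
  have mem: "sh k l s \<in> zero_set_GL (Sk k l)"
    using inv by (rule sh_mem_Sk)
  then have "f (sh k l s) \<in> lie_algebra (zero_set_GL (Sk k l))"
    using coh alg_Sk unfolding delta_coherent_def by blast
  moreover have "mat_eval (Var (a, b) - Const (if a = b then 1 else 0)) g = 0" if "g \<in> zero_set_GL (Sk k l)" for g :: "'a^'n^'n"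
  proof -
    have "g $ a $ b = (if a = b then 1 else 0)" using that ab unfolding zero_set_Sk by blast
    then show ?thesis by (simp add: mat_eval_simps)
  qed
  ultimately have "coeff (pev (Var (a, b) - Const (if a = b then 1 else 0)) (f (sh k l s))) 1 = 0"
    by (rule lie_van)
  then show ?thesis by (simp add: pev_simps)
qed

lemma (in deriv) coh_sh_form:
  assumes coh: "delta_coherent \<delta> f" and inv: "invertible (sh k l s :: 'a^'n::finite^'n)"
  shows "f (sh k l s) = sm (f (sh k l s) $ k $ l) (Em k l)"
  using coh_sh[OF coh inv] by (auto simp: vec_eq_iff)



locale cocyc = deriv \<delta> for \<delta> :: "'a::field_char_0 \<Rightarrow> 'a" +
  fixes f :: "'a^'n::finite^'n \<Rightarrow> 'a^'n^'n"
  assumes coc: "\<And>g1 g2. invertible g1 \<Longrightarrow> invertible g2 \<Longrightarrow> f (g1 ** g2) = f g1 + g1 ** f g2 ** matrix_inv g1"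
    and coh: "delta_coherent \<delta> f"
begin

definition phi :: "'n \<Rightarrow> 'n \<Rightarrow> 'a \<Rightarrow> 'a" where
  "phi i j s = f (sh i j s) $ i $ j"

lemma inv1: "invertible (mat 1 :: 'a^'n^'n)" "matrix_inv (mat 1 :: 'a^'n^'n) = mat 1"
  by (rule inv_unique, simp)+

lemma f1: "f (mat 1) = 0"
  using coc[OF inv1(1) inv1(1)] inv1(2) by simp

lemma f_off: "i \<noteq> j \<Longrightarrow> f (sh i j s) = sm (phi i j s) (Em i j)"
  unfolding phi_def by (rule coh_sh_form[OF coh sh_off_inv(2)])

lemma f_diag: "t \<noteq> 0 \<Longrightarrow> f (sh i i t) = sm (phi i i t) (Em i i)"
  unfolding phi_def by (rule coh_sh_form[OF coh sh_diag_inv(2)])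

lemma phi_add:
  assumes ij: "i \<noteq> j"
  shows "phi i j (s + s') = phi i j s + phi i j s'"
proof -
  have "f (sh i j s ** sh i j s') = f (sh i j s) + sh i j s ** f (sh i j s') ** matrix_inv (sh i j s)"
    by (rule coc) (rule sh_off_inv(2)[OF ij])+
  then have "f (sh i j (s + s')) $ i $ j = (f (sh i j s) + sh i j s ** f (sh i j s') ** sh i j (- s)) $ i $ j"
    using ij by (simp add: sh_off_mult sh_off_inv f_off)
  then show ?thesis
    using ij by (simp only: f_off[OF ij]) (simp add: sh_off ring_mat)
qed

lemma rel1:
  assumes ij: "i \<noteq> j" and t: "t \<noteq> 0"
  shows "phi i j (t * s) = t * phi i j s + t * s * phi i i t"
proof -
  have eq: "sh i i t ** sh i j s = sh i j (t * s) ** (sh i i t :: 'a^'n^'n)"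
    using ij by (simp add: sh_off sh_diag ring_mat algebra_simps sm_plus_scalar)
  have "f (sh i i t ** sh i j s) = f (sh i i t) + sh i i t ** f (sh i j s) ** sh i i (inverse t)"
    using coc[of "sh i i t" "sh i j s"] ij t by (simp add: sh_off_inv sh_diag_inv f_off f_diag)
  moreover have "f (sh i j (t * s) ** sh i i t) = f (sh i j (t * s)) + sh i j (t * s) ** f (sh i i t) ** sh i j (- (t * s))"
    using coc[of "sh i j (t * s)" "sh i i t"] ij t by (simp add: sh_off_inv sh_diag_inv f_off f_diag)
  ultimately have "(f (sh i i t) + sh i i t ** f (sh i j s) ** sh i i (inverse t)) $ i $ j =
     (f (sh i j (t * s)) + sh i j (t * s) ** f (sh i i t) ** sh i j (- (t * s))) $ i $ j"
    using eq by simp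
  then show ?thesis
    using ij t by (simp only: f_off[OF ij] f_diag[OF t]) (simp add: sh_off sh_diag ring_mat field_simps)
qed

lemma rel2:
  assumes ij: "i \<noteq> j" and t: "t \<noteq> 0"
  shows "phi i j s / t = phi i j (s / t) + s / t * phi j j t"
proof -
  have eq: "sh j j t ** sh i j s = sh i j (s / t) ** (sh j j t :: 'a^'n^'n)"
    using ij t by (simp add: sh_off sh_diag ring_mat algebra_simps sm_plus_scalar, simp add: field_simps)
  have "f (sh j j t ** sh i j s) = f (sh j j t) + sh j j t ** f (sh i j s) ** sh j j (inverse t)"
    using coc[of "sh j j t" "sh i j s"] ij t by (simp add: sh_off_inv sh_diag_inv f_off f_diag)
  moreover have "f (sh i j (s / t) ** sh j j t) = f (sh i j (s / t)) + sh i j (s / t) ** f (sh j j t) ** sh i j (- (s / t))"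
    using coc[of "sh i j (s / t)" "sh j j t"] ij t by (simp add: sh_off_inv sh_diag_inv f_off f_diag)
  ultimately have "(f (sh j j t) + sh j j t ** f (sh i j s) ** sh j j (inverse t)) $ i $ j =
     (f (sh i j (s / t)) + sh i j (s / t) ** f (sh j j t) ** sh i j (- (s / t))) $ i $ j"
    using eq by simp
  then show ?thesis
    using ij t by (simp only: f_off[OF ij] f_diag[OF t]) (simp add: sh_off sh_diag ring_mat field_simps)
qed

end


definition rot :: "'n::finite \<Rightarrow> 'n \<Rightarrow> 'a::field \<Rightarrow> 'a \<Rightarrow> 'a^'n^'n" where
  "rot i j x y = (\<chi> a b. if a = i \<and> b = i \<or> a = j \<and> b = j then x else if a = i \<and> b = j then y
      else if a = j \<and> b = i then - y else if a = b then 1 else 0)"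

lemma rot_nth: "rot i j x y $ a $ b = (if a = i \<and> b = i \<or> a = j \<and> b = j then x else if a = i \<and> b = j then y
      else if a = j \<and> b = i then - y else if a = b then 1 else 0)"
  by (simp add: rot_def)

lemma rot_Em: "i \<noteq> j \<Longrightarrow> (rot i j x y :: 'a::field^'n::finite^'n) =
   mat 1 + sm (x - 1) (Em i i) + sm (x - 1) (Em j j) + sm y (Em i j) - sm y (Em j i)"
  by (auto simp: vec_eq_iff rot_nth)

lemma rot_mult: assumes ij: "i \<noteq> j" shows "(rot i j x y ** rot i j x' y' :: 'a::field^'n::finite^'n) = rot i j (x * x' - y * y') (x * y' + y * x')"
proof -
  have "(rot i j x y ** rot i j x' y' :: 'a::field^'n::finite^'n) $ a $ b = rot i j (x * x' - y * y') (x * y' + y * x') $ a $ b" for a b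
    unfolding rot_Em[OF ij] using ij by (simp add: ring_mat) (auto simp: algebra_simps)
  then show ?thesis by (simp add: vec_eq_iff)
qed
definition Sw :: "'n \<Rightarrow> 'n \<Rightarrow> ('n \<times> 'n, 'a::field) mpoly set" where
  "Sw i j = {Var (a, b) - Const (if a = b then 1 else 0) | a b. \<not> (a \<in> {i, j} \<and> b \<in> {i, j})} \<union>
     {Var (i, i) - Var (j, j), Var (i, j) + Var (j, i), Var (i, i) * Var (i, j), Var (i, i) ^ 2 + Var (i, j) ^ 2 - 1}"

lemma mem_Sw:
  assumes ij: "i \<noteq> j"
  shows "(g :: 'a::field^'n::finite^'n) \<in> zero_set_GL (Sw i j) \<longleftrightarrow>
    invertible g \<and> (\<exists>x y. x * y = 0 \<and> x^2 + y^2 = 1 \<and> g = rot i j x y)"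
proof
  assume g: "g \<in> zero_set_GL (Sw i j)"
  have ev: "mat_eval p g = 0" if "p \<in> Sw i j" for p using g that unfolding zero_set_GL_def by blast
  have out: "g $ a $ b = (if a = b then 1 else 0)" if "\<not> (a \<in> {i, j} \<and> b \<in> {i, j})" for a b
  proof -
    have "Var (a, b) - Const (if a = b then 1 else 0) \<in> Sw i j" using that unfolding Sw_def by blast
    from ev[OF this] show ?thesis by (simp add: mat_eval_simps)
  qed
  have e1: "g $ i $ i = g $ j $ j" using ev[of "Var (i, i) - Var (j, j)"] unfolding Sw_def by (simp add: mat_eval_simps)
  have e2: "g $ j $ i = - g $ i $ j" using ev[of "Var (i, j) + Var (j, i)"] unfolding Sw_def
    by (auto simp: mat_eval_simps add_eq_0_iff)
  have e3: "g $ i $ i * g $ i $ j = 0" using ev[of "Var (i, i) * Var (i, j)"] unfolding Sw_def by (simp add: mat_eval_simps)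
  have e4: "(g $ i $ i)^2 + (g $ i $ j)^2 = 1" using ev[of "Var (i, i) ^ 2 + Var (i, j) ^ 2 - 1"] unfolding Sw_def by (simp add: mat_eval_simps)
  have "g = rot i j (g $ i $ i) (g $ i $ j)"
    unfolding vec_eq_iff rot_nth using out e1 e2 ij by auto
  then show "invertible g \<and> (\<exists>x y. x * y = 0 \<and> x^2 + y^2 = 1 \<and> g = rot i j x y)"
    using e3 e4 g unfolding zero_set_GL_def by blast
next
  assume "invertible g \<and> (\<exists>x y. x * y = 0 \<and> x^2 + y^2 = 1 \<and> g = rot i j x y)"
  then obtain x y where g: "invertible g" and xy: "x * y = 0" "x^2 + y^2 = 1" and gr: "g = rot i j x y" by blast
  show "g \<in> zero_set_GL (Sw i j)"
    unfolding zero_set_GL_def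
  proof (intro CollectI conjI ballI)
    show "invertible g" by (rule g)
  next
    fix p :: "('n \<times> 'n, 'a) mpoly" assume "p \<in> Sw i j"
    then show "mat_eval p g = 0"
      unfolding Sw_def using xy ij by (auto simp: mat_eval_simps gr rot_nth)
  qed
qed

lemma rot_inv:
  assumes ij: "i \<noteq> j" and n: "x^2 + y^2 = 1"
  shows "matrix_inv (rot i j x y :: 'a::field^'n::finite^'n) = rot i j x (- y)" "invertible (rot i j x y :: 'a::field^'n::finite^'n)"
proof -
  have "(rot i j x y :: 'a::field^'n::finite^'n) ** rot i j x (- y) = rot i j (x * x - y * (- y)) (x * (- y) + y * x)"
    by (rule rot_mult[OF ij])
  also have "\<dots> = rot i j 1 0"
    using n by (simp add: power2_eq_square)
  also have "(rot i j 1 0 :: 'a::field^'n::finite^'n) = mat 1"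
    using ij by (simp add: rot_Em)
  finally show "matrix_inv (rot i j x y :: 'a::field^'n::finite^'n) = rot i j x (- y)" "invertible (rot i j x y :: 'a::field^'n::finite^'n)"
    by (rule inv_unique)+
qed

lemma subgroup_Sw_3:
  fixes g h :: "'a::field^'n::finite^'n"
  assumes ij: "i \<noteq> j" and g: "g \<in> zero_set_GL (Sw i j)" and h: "h \<in> zero_set_GL (Sw i j)"
  shows "g ** h \<in> zero_set_GL (Sw i j)"
proof -
  obtain x y where g1: "invertible g" and xy: "x * y = 0" "x^2 + y^2 = 1" and gr: "g = rot i j x y"
    using g mem_Sw[OF ij] by blast
  obtain x' y' where h1: "invertible h" and xy': "x' * y' = 0" "x'^2 + y'^2 = 1" and hr: "h = rot i j x' y'"
    using h mem_Sw[OF ij] by blast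
  have gh: "g ** h = rot i j (x * x' - y * y') (x * y' + y * x')"
    unfolding gr hr by (rule rot_mult[OF ij])
  have "(x * x' - y * y') * (x * y' + y * x') = x^2 * (x' * y') + x'^2 * (x * y) - y'^2 * (x * y) - y^2 * (x' * y')"
    by (simp add: power2_eq_square algebra_simps)
  then have c1: "(x * x' - y * y') * (x * y' + y * x') = 0" using xy xy' by simp
  have "(x * x' - y * y')^2 + (x * y' + y * x')^2 = (x^2 + y^2) * (x'^2 + y'^2)"
    by (simp add: power2_eq_square algebra_simps)
  then have c2: "(x * x' - y * y')^2 + (x * y' + y * x')^2 = 1" using xy xy' by simp
  have "invertible (g ** h)" using g1 h1 by (simp add: invertible_mult)
  then show ?thesis unfolding mem_Sw[OF ij] using gh c1 c2 by blast
qed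

lemma subgroup_Sw_4:
  fixes g :: "'a::field^'n::finite^'n"
  assumes ij: "i \<noteq> j" and g: "g \<in> zero_set_GL (Sw i j)"
  shows "matrix_inv g \<in> zero_set_GL (Sw i j)"
proof -
  obtain x y where g1: "invertible g" and xy: "x * y = 0" "x^2 + y^2 = 1" and gr: "g = rot i j x y"
    using g mem_Sw[OF ij] by blast
  have "matrix_inv g = rot i j x (- y)" unfolding gr by (rule rot_inv[OF ij xy(2)])
  moreover have "invertible (rot i j x (- y) :: 'a::field^'n::finite^'n)" using rot_inv[OF ij, of x "-y"] xy by simp
  moreover have "x * (- y) = 0" "x^2 + (- y)^2 = 1" using xy by simp_all
  ultimately show ?thesis unfolding mem_Sw[OF ij] by metis
qed

lemma subgroup_Sw:
  assumes ij: "i \<noteq> j"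
  shows "is_subgroup_GL (zero_set_GL (Sw i j) :: ('a::field^'n::finite^'n) set)"
proof -
  have "zero_set_GL (Sw i j) \<subseteq> {g :: 'a::field^'n::finite^'n. invertible g}"
    unfolding zero_set_GL_def by blast
  moreover have "(mat 1 :: 'a::field^'n::finite^'n) \<in> zero_set_GL (Sw i j)"
  proof -
    have "(mat 1 :: 'a::field^'n::finite^'n) = rot i j 1 0" using ij by (simp add: rot_Em)
    moreover have "invertible (mat 1 :: 'a::field^'n::finite^'n)" by (rule inv_unique(2)) simp
    moreover have "(1::'a) * 0 = 0" "(1::'a)^2 + 0^2 = 1" by simp_all
    ultimately show ?thesis unfolding mem_Sw[OF ij] by metis
  qed
  ultimately show ?thesis
    unfolding is_subgroup_GL_def using subgroup_Sw_3[OF ij] subgroup_Sw_4[OF ij] by blast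
qed

lemma (in deriv) alg_Sw:
  assumes ij: "i \<noteq> j"
  shows "alg_subgroup_over_constants \<delta> (zero_set_GL (Sw i j) :: ('a^'n::finite^'n) set)"
proof (rule alg_subgroupI[OF _ refl subgroup_Sw[OF ij]])
  fix p :: "('n \<times> 'n, 'a) mpoly" assume "p \<in> Sw i j"
  then have "(\<exists>a b. p = Var (a, b) - Const (if a = b then 1 else 0)) \<or> p = Var (i, i) - Var (j, j) \<or>
     p = Var (i, j) + Var (j, i) \<or> p = Var (i, i) * Var (i, j) \<or> p = Var (i, i) ^ 2 + Var (i, j) ^ 2 - 1"
    unfolding Sw_def by blast
  then show "ccoef \<delta> p"
  proof (elim disjE exE)
    fix a b assume "p = Var (a, b) - Const (if a = b then 1 else 0)"
    then show ?thesis by (simp add: ccoef_diff ccoef_Var ccoef_Const)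
  qed (simp_all add: ccoef_diff ccoef_Var ccoef_add ccoef_mult ccoef_power ccoef_one)
qed

context cocyc begin

lemma phi_one:
  assumes ij: "i \<noteq> j"
  shows "phi i j 1 = 0"
proof -
  let ?u = "sh i j 1 :: 'a^'n^'n" and ?l = "sh j i (-1) :: 'a^'n^'n"
  have "(?u ** ?l ** ?u) $ a $ b = rot i j 0 1 $ a $ b" for a b
    unfolding sh_off[OF ij] sh_off[OF ij[symmetric]] rot_Em[OF ij] using ij by (simp add: ring_mat)
  then have w: "?u ** ?l ** ?u = rot i j 0 1" by (simp add: vec_eq_iff)
  have mem: "rot i j 0 1 \<in> (zero_set_GL (Sw i j) :: ('a^'n^'n) set)"
  proof -
    have "(0::'a) * 1 = 0" "(0::'a)^2 + 1^2 = 1" by simp_all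
    then show ?thesis unfolding mem_Sw[OF ij] using rot_inv(2)[OF ij, of 0 1] by metis
  qed
  then have L: "f (rot i j 0 1) \<in> lie_algebra (zero_set_GL (Sw i j))"
    using coh alg_Sw[OF ij] unfolding delta_coherent_def by blast
  have v3: "mat_eval (Var (i, i) * Var (i, j)) g = 0" if "g \<in> zero_set_GL (Sw i j)" for g :: "'a^'n^'n"
    using that unfolding zero_set_GL_def Sw_def by blast
  have v4: "mat_eval (Var (i, i) ^ 2 + Var (i, j) ^ 2 - 1) g = 0" if "g \<in> zero_set_GL (Sw i j)" for g :: "'a^'n^'n"
    using that unfolding zero_set_GL_def Sw_def by blast
  have c3: "f (rot i j 0 1) $ i $ j = 0"
    using lie_van[OF L v3] ij by (simp add: pev_simps)
  have c4: "f (rot i j 0 1) $ i $ i = 0"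
    using lie_van[OF L v4] ij by (simp add: pev_simps power2_eq_square)
  have ui: "invertible ?u" "invertible ?l" "matrix_inv ?u = sh i j (-1)" "matrix_inv ?l = sh j i 1"
    using ij by (simp_all add: sh_off_inv)
  have "f (?u ** (?l ** ?u)) = f ?u + ?u ** (f ?l + ?l ** f ?u ** sh j i 1) ** sh i j (-1)"
    using coc[of ?u "?l ** ?u"] coc[of ?l ?u] ui by (simp add: invertible_mult)
  then have fw: "f (rot i j 0 1) = sm (phi i j 1) (Em i j) + ?u ** (sm (phi j i (-1)) (Em j i) + ?l ** sm (phi i j 1) (Em i j) ** sh j i 1) ** sh i j (-1)"
    using w ij by (simp add: matrix_mul_assoc f_off)
  have "f (rot i j 0 1) $ i $ j = phi i j 1 - phi j i (-1)"
    unfolding fw using ij by (simp add: sh_off ring_mat)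
  moreover have "f (rot i j 0 1) $ i $ i = phi j i (-1)"
    unfolding fw using ij by (simp add: sh_off ring_mat)
  ultimately show ?thesis using c3 c4 by simp
qed

end



lemma dpeval_subst:
  "dpeval \<delta> (meval (\<lambda>c. Poly_Mapping.single 0 c) P X) a = mpeval P (\<lambda>v. dpeval \<delta> (X v) a)"
  unfolding dpeval_def by (rule meval_subst)

context cocyc begin

lemma phi_zero: "i \<noteq> j \<Longrightarrow> phi i j 0 = 0"
  using phi_add[of i j 0 0] by simp

lemma phi_deriv:
  assumes ij: "i \<noteq> j"
  shows "deriv (phi i j)"
proof
  fix a b
  show "phi i j (a + b) = phi i j a + phi i j b" by (rule phi_add[OF ij])
  show "phi i j (a * b) = a * phi i j b + phi i j a * b"
  proof (cases "a = 0")
    case True then show ?thesis using phi_zero[OF ij] by simp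
  next
    case False
    have "phi i j (a * 1) = a * phi i j 1 + a * 1 * phi i i a" by (rule rel1[OF ij False])
    then have pa: "phi i j a = a * phi i i a" using phi_one[OF ij] by simp
    have "phi i j (a * b) = a * phi i j b + a * b * phi i i a" by (rule rel1[OF ij False])
    then show ?thesis using pa by (simp add: algebra_simps)
  qed
qed

lemma phi_poly:
  assumes ij: "i \<noteq> j" and dm: "is_delta_map \<delta> f"
  shows "\<exists>Q. \<forall>s. phi i j s = dpeval \<delta> Q s"
proof -
  obtain F where F: "\<And>g a b. invertible g \<Longrightarrow> f g $ a $ b = delta_map_eval \<delta> (F a b) g"
    using dm unfolding is_delta_map_def by blast
  define X :: "(nat \<times> 'n \<times> 'n) option \<Rightarrow> (nat, 'a) mpoly" where
    "X v = (case v of None \<Rightarrow> Const 1 | Some (d, a, b) \<Rightarrow>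
        if (a, b) = (i, j) then Var d else Const ((\<delta> ^^ d) (mat 1 $ a $ b)))" for v
  define Q where "Q = meval (\<lambda>c. Poly_Mapping.single 0 c) (F i j) X"
  have "phi i j s = dpeval \<delta> Q s" for s
  proof -
    have "phi i j s = delta_map_eval \<delta> (F i j) (sh i j s)"
      unfolding phi_def by (rule F[OF sh_off_inv(2)[OF ij]])
    also have "\<dots> = mpeval (F i j) (\<lambda>v. dpeval \<delta> (X v) s)"
      unfolding delta_map_eval_def
    proof (rule arg_cong[of _ _ "mpeval (F i j)"], rule ext)
      fix v :: "(nat \<times> 'n \<times> 'n) option"
      show "(case v of None \<Rightarrow> inverse (det (sh i j s)) | Some (d, a, b) \<Rightarrow> (\<delta> ^^ d) (sh i j s $ a $ b)) =
            dpeval \<delta> (X v) s"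
        using ij by (auto simp: X_def dpeval_Const dpeval_Var det_sh_off sh_nth split: option.splits)
    qed
    also have "\<dots> = dpeval \<delta> Q s"
      unfolding Q_def by (rule dpeval_subst[symmetric])
    finally show ?thesis .
  qed
  then show ?thesis by blast
qed

lemma phi_nu:
  assumes cl: "delta_closed \<delta>" and ij: "i \<noteq> j" and dm: "is_delta_map \<delta> f"
  shows "\<exists>\<nu>. \<forall>s. phi i j s = \<nu> * \<delta> s"
  using phi_poly[OF ij dm] poly_derivation[OF cl phi_deriv[OF ij]] by blast

end



lemma Em_mult_nth: "(Em a b ** B :: 'a::field^'n::finite^'n) $ x $ y = (if x = a then B $ b $ y else 0)"
proof -
  have "(Em a b ** B :: 'a::field^'n::finite^'n) $ x $ y = (\<Sum>k\<in>UNIV. Em a b $ x $ k * B $ k $ y)"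
    by (simp add: matrix_matrix_mult_def)
  also have "\<dots> = Em a b $ x $ b * B $ b $ y"
    by (rule sum_single_index) auto
  finally show ?thesis by simp
qed

lemma mult_Em_nth: "(B ** Em a b :: 'a::field^'n::finite^'n) $ x $ y = (if y = b then B $ x $ a else 0)"
proof -
  have "(B ** Em a b :: 'a::field^'n::finite^'n) $ x $ y = (\<Sum>k\<in>UNIV. B $ x $ k * Em a b $ k $ y)"
    by (simp add: matrix_matrix_mult_def)
  also have "\<dots> = B $ x $ a * Em a b $ a $ y"
    by (rule sum_single_index) auto
  finally show ?thesis by simp
qed

lemma sh_left_nth: "l \<noteq> k \<Longrightarrow> (sh l k c ** B :: 'a::field^'n::finite^'n) $ a $ b = B $ a $ b + (if a = l then c * B $ k $ b else 0)"
  by (simp add: sh_off matrix_add_rdistrib sm_mult_left Em_mult_nth)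

lemma sh_right_nth: "l \<noteq> k \<Longrightarrow> (B ** sh l k c :: 'a::field^'n::finite^'n) $ a $ b = B $ a $ b + (if b = k then c * B $ a $ l else 0)"
  by (simp add: sh_off matrix_add_ldistrib sm_mult_right mult_Em_nth)

lemma gen_induct:
  fixes P :: "'a::field^'n::finite^'n \<Rightarrow> bool"
  assumes mult: "\<And>A B. P A \<Longrightarrow> P B \<Longrightarrow> P (A ** B)"
    and zero_row: "\<And>A i. row i A = 0 \<Longrightarrow> P A"
    and diagonal: "\<And>A. (\<And>i j. i \<noteq> j \<Longrightarrow> A $ i $ j = 0) \<Longrightarrow> P A"
    and shear: "\<And>i j c. i \<noteq> j \<Longrightarrow> P (sh i j c)"
  shows "P A"
proof -
  have main: "\<And>A. (\<And>i j. j \<notin> K \<Longrightarrow> i \<noteq> j \<Longrightarrow> A $ i $ j = 0) \<Longrightarrow> P A" if "finite K" for K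
    using that
  proof (induction K rule: finite_induct)
    case empty
    then show ?case using diagonal by blast
  next
    case (insert k K)
    have inner: "\<And>B. B $ k $ k \<noteq> 0 \<Longrightarrow> (\<And>i j. j \<notin> insert k K \<Longrightarrow> i \<noteq> j \<Longrightarrow> B $ i $ j = 0) \<Longrightarrow>
        (\<And>i. i \<notin> L \<Longrightarrow> i \<noteq> k \<Longrightarrow> B $ i $ k = 0) \<Longrightarrow> P B" if "finite L" for L
      using that
    proof (induction L rule: finite_induct)
      case (empty B)
      show ?case
      proof (rule insert.IH)
        fix i j assume "j \<notin> K" "i \<noteq> j"
        then show "B $ i $ j = 0"
          using empty.prems by (cases "j = k") auto
      qed
    next
      case (insert l L B)
      show ?case
      proof (cases "l = k")
        case True
        show ?thesis
          by (rule insert.IH[OF insert.prems(1,2)]) (use insert.prems(3) True in auto)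
      next
        case False
        define c where "c = B $ l $ k / B $ k $ k"
        define C where "C = sh l k (- c) ** B"
        have Cn: "C $ a $ b = B $ a $ b + (if a = l then - c * B $ k $ b else 0)" for a b
          unfolding C_def by (rule sh_left_nth[OF False])
        have "P C"
        proof (rule insert.IH)
          show "C $ k $ k \<noteq> 0" using insert.prems(1) False by (simp add: Cn)
        next
          fix i j assume ij: "j \<notin> insert k K" "i \<noteq> j"
          then have "B $ k $ j = 0" "B $ i $ j = 0" using insert.prems(2) by auto
          then show "C $ i $ j = 0" by (simp add: Cn)
        next
          fix i assume i: "i \<notin> L" "i \<noteq> k"
          show "C $ i $ k = 0"
          proof (cases "i = l")
            case True
            then show ?thesis using insert.prems(1) by (simp add: Cn c_def)
          next
            case False
            then show ?thesis using i insert.prems(3) by (simp add: Cn)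
          qed
        qed
        moreover have "B = sh l k c ** C"
        proof -
          have "sh l k c ** C = (sh l k c ** sh l k (- c)) ** B"
            by (simp add: C_def matrix_mul_assoc)
          also have "\<dots> = B" using False by (simp add: sh_off_mult sh_zero_id)
          finally show ?thesis by simp
        qed
        ultimately show ?thesis using mult shear[OF False] by metis
      qed
    qed
    have innerU: "\<And>B. B $ k $ k \<noteq> 0 \<Longrightarrow> (\<And>i j. j \<notin> insert k K \<Longrightarrow> i \<noteq> j \<Longrightarrow> B $ i $ j = 0) \<Longrightarrow> P B"
      using inner[of UNIV] by auto
    show ?case
    proof (cases "A $ k $ k = 0")
      case False
      then show ?thesis using innerU insert.prems by blast
    next
      case kk: True
      show ?thesis
      proof (cases "row k A = 0")
        case True
        then show ?thesis by (rule zero_row)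
      next
        case False
        then obtain l where l: "A $ k $ l \<noteq> 0" by (auto simp: row_def vec_eq_iff)
        then have lk: "l \<noteq> k" using kk by auto
        define A' where "A' = A ** sh l k 1"
        have An: "A' $ a $ b = A $ a $ b + (if b = k then 1 * A $ a $ l else 0)" for a b
          unfolding A'_def by (rule sh_right_nth[OF lk])
        have "P A'"
        proof (rule innerU)
          show "A' $ k $ k \<noteq> 0" using kk l by (simp add: An)
        next
          fix i j assume "j \<notin> insert k K" "i \<noteq> j"
          then show "A' $ i $ j = 0" using insert.prems by (simp add: An)
        qed
        moreover have "A = A' ** sh l k (- 1)"
        proof -
          have "A' ** sh l k (- 1) = A ** (sh l k 1 ** sh l k (- 1))"
            by (simp add: A'_def matrix_mul_assoc)
          also have "\<dots> = A" using lk by (simp add: sh_off_mult sh_zero_id)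
          finally show ?thesis by simp
        qed
        ultimately show ?thesis using mult shear[OF lk] by metis
      qed
    qed
  qed
  show ?thesis by (rule main[of UNIV]) auto
qed



lemma (in deriv) dmat_mult: "dmat \<delta> (A ** B) = dmat \<delta> A ** B + A ** dmat \<delta> (B :: 'a^'n::finite^'n)"
  by (simp add: vec_eq_iff dmat_def matrix_matrix_mult_def dsum dmult sum.distrib algebra_simps)

lemma (in deriv) dmat_sh_off: "i \<noteq> j \<Longrightarrow> dmat \<delta> (sh i j s :: 'a^'n::finite^'n) = sm (\<delta> s) (Em i j)"
  by (auto simp: vec_eq_iff dmat_def sh_nth)

lemma (in deriv) dmat_sh_diag: "dmat \<delta> (sh i i t :: 'a^'n::finite^'n) = sm (\<delta> t) (Em i i)"
  by (auto simp: vec_eq_iff dmat_def sh_nth)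

lemma (in deriv) logd_cocycle:
  fixes A B :: "'a^'n::finite^'n"
  assumes A: "invertible A" and B: "invertible B"
  shows "dmat \<delta> (A ** B) ** matrix_inv (A ** B) = dmat \<delta> A ** matrix_inv A + A ** (dmat \<delta> B ** matrix_inv B) ** matrix_inv A"
proof -
  have "dmat \<delta> (A ** B) ** matrix_inv (A ** B) = (dmat \<delta> A ** B + A ** dmat \<delta> B) ** (matrix_inv B ** matrix_inv A)"
    by (simp add: dmat_mult inv_mult[OF A B])
  also have "\<dots> = dmat \<delta> A ** (B ** matrix_inv B) ** matrix_inv A + A ** (dmat \<delta> B ** matrix_inv B) ** matrix_inv A"
    by (simp add: matrix_add_rdistrib matrix_mul_assoc)
  also have "\<dots> = dmat \<delta> A ** matrix_inv A + A ** (dmat \<delta> B ** matrix_inv B) ** matrix_inv A"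
    using inv_props[OF B] by simp
  finally show ?thesis .
qed

lemma diag_induct:
  fixes P :: "'a::field^'n::finite^'n \<Rightarrow> bool"
  assumes mult: "\<And>A B. P A \<Longrightarrow> P B \<Longrightarrow> P (A ** B)"
    and base: "\<And>k t. P (sh k k t)"
    and D: "\<And>i j. i \<noteq> j \<Longrightarrow> A $ i $ j = 0"
  shows "P A"
proof -
  have main: "\<And>A. (\<And>i j. i \<noteq> j \<Longrightarrow> A $ i $ j = 0) \<Longrightarrow> (\<And>k. k \<notin> S \<Longrightarrow> A $ k $ k = 1) \<Longrightarrow> P A"
    if "finite S" for S
    using that
  proof (induction S rule: finite_induct)
    case (empty A)
    obtain k :: 'n where True by blast
    have "A = sh k k 1" using empty.prems by (auto simp: vec_eq_iff sh_nth)
    then show ?case using base by simp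
  next
    case (insert k S A)
    define A' where "A' = (\<chi> a b. if a = k \<and> b = k then 1 else A $ a $ b)"
    have "P A'"
      by (rule insert.IH) (use insert.prems in \<open>auto simp: A'_def\<close>)
    moreover have "A = A' ** sh k k (A $ k $ k)"
    proof -
      have "(A' ** sh k k (A $ k $ k)) $ a $ b = A $ a $ b" for a b
        using insert.prems(1)[of a b]
        by (auto simp: sh_diag matrix_add_ldistrib sm_mult_right mult_Em_nth A'_def)
      then show ?thesis by (simp add: vec_eq_iff)
    qed
    ultimately show ?case using mult base by metis
  qed
  show ?thesis by (rule main[of UNIV]) (auto simp: D)
qed

lemma exists_other:
  assumes "CARD('n::finite) \<ge> 2"
  shows "\<exists>j::'n. j \<noteq> i"
proof (rule ccontr)
  assume "\<not> (\<exists>j::'n. j \<noteq> i)"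
  then have "(UNIV :: 'n set) = {i}" by auto
  then have "card (UNIV :: 'n set) = card {i}" by simp
  then show False using assms by simp
qed

theorem theorem1p4:
  fixes \<delta> :: "'a::field_char_0 \<Rightarrow> 'a"
    and f :: "'a^'n::finite^'n \<Rightarrow> 'a^'n^'n"
  assumes "delta_closed \<delta>"
    and "CARD('n) \<ge> 2"
    and "is_delta_map \<delta> f"
    and "\<And>g1 g2. invertible g1 \<Longrightarrow> invertible g2 \<Longrightarrow>
           f (g1 ** g2) = f g1 + g1 ** f g2 ** matrix_inv g1"
    and "delta_coherent \<delta> f"
  shows "\<exists>\<nu>. \<forall>g. invertible g \<longrightarrow> f g = mat \<nu> ** (dmat \<delta> g ** matrix_inv g)"
proof -
  note cl = assms(1) and card = assms(2) and dm = assms(3)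
  interpret deriv \<delta> by (rule deriv_delta_closed[OF cl])
  interpret cocyc \<delta> f
    by unfold_locales (use assms(4,5) in auto)
  obtain t0 where t0: "\<delta> t0 = 1" using ex_t[OF cl] by blast
  have t0nz: "t0 \<noteq> 0" using t0 by auto
  define nu where "nu i j = (SOME \<nu>. \<forall>s. phi i j s = \<nu> * \<delta> s)" for i j
  have nu: "phi i j s = nu i j * \<delta> s" if "i \<noteq> j" for i j s
    using someI_ex[OF phi_nu[OF cl that dm]] unfolding nu_def by blast
  have psi1: "phi i i t = nu i j * \<delta> t / t" if ij: "i \<noteq> j" and t: "t \<noteq> 0" for i j t
  proof -
    have "phi i j (t * 1) = t * phi i j 1 + t * 1 * phi i i t" by (rule rel1[OF ij t])
    then have "phi i j t = t * phi i i t" using phi_one[OF ij] by simp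
    then show ?thesis using nu[OF ij] t by (simp add: field_simps)
  qed
  have psi2: "phi j j t = nu i j * \<delta> t / t" if ij: "i \<noteq> j" and t: "t \<noteq> 0" for i j t
  proof -
    have "phi i j t / t = phi i j (t / t) + t / t * phi j j t" by (rule rel2[OF ij t])
    then have "phi i j t / t = phi j j t" using phi_one[OF ij] t by simp
    then show ?thesis using nu[OF ij] t by (simp add: field_simps)
  qed
  define mu where "mu k = t0 * phi k k t0" for k
  have mu1: "nu i j = mu i" if "i \<noteq> j" for i j
    using psi1[OF that t0nz] t0 t0nz by (simp add: mu_def)
  have mu2: "nu i j = mu j" if "i \<noteq> j" for i j
    using psi2[OF that t0nz] t0 t0nz by (simp add: mu_def)
  obtain k0 :: 'n where True by blast
  define \<nu> where "\<nu> = mu k0"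
  have muc: "mu k = \<nu>" for k
  proof (cases "k = k0")
    case True then show ?thesis by (simp add: \<nu>_def)
  next
    case False then show ?thesis using mu1[OF False] mu2[OF False] by (simp add: \<nu>_def)
  qed
  have phi_off: "phi i j s = \<nu> * \<delta> s" if "i \<noteq> j" for i j s
    using nu[OF that] mu1[OF that] muc by simp
  have phi_diag: "phi i i t = \<nu> * \<delta> t / t" if "t \<noteq> 0" for i t
  proof -
    obtain j where "j \<noteq> i" using exists_other[OF card] by blast
    then show ?thesis using psi1[OF _ that, of i j] mu1[of i j] muc by auto
  qed
  let ?P = "\<lambda>g. invertible g \<longrightarrow> f g = sm \<nu> (dmat \<delta> g ** matrix_inv g)"
  have mult: "?P (A ** B)" if PA: "?P A" and PB: "?P B" for A B
  proof
    assume "invertible (A ** B)"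
    then have A: "invertible A" and B: "invertible B" by (simp_all add: invertible_mult_iff)
    have "f (A ** B) = f A + A ** f B ** matrix_inv A" by (rule coc[OF A B])
    also have "\<dots> = sm \<nu> (dmat \<delta> A ** matrix_inv A) + A ** sm \<nu> (dmat \<delta> B ** matrix_inv B) ** matrix_inv A"
      using PA PB A B by simp
    also have "\<dots> = sm \<nu> (dmat \<delta> (A ** B) ** matrix_inv (A ** B))"
      by (simp add: logd_cocycle[OF A B] sm_add sm_mult_left sm_mult_right)
    finally show "f (A ** B) = sm \<nu> (dmat \<delta> (A ** B) ** matrix_inv (A ** B))" .
  qed
  have zero_row: "?P A" if "row i A = 0" for A i
  proof -
    have "det A = 0" using that by (rule det_zero_row(2))
    then show ?thesis by (simp add: invertible_det_nz)
  qed
  have shear: "?P (sh i j c)" if ij: "i \<noteq> j" for i j c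
  proof -
    have "f (sh i j c) = sm (\<nu> * \<delta> c) (Em i j)" using f_off[OF ij] phi_off[OF ij] by simp
    moreover have "sm \<nu> (dmat \<delta> (sh i j c) ** matrix_inv (sh i j c)) = sm (\<nu> * \<delta> c) (Em i j)"
      using ij by (simp only: dmat_sh_off[OF ij] sh_off_inv(1)[OF ij]) (simp add: sh_off ring_mat)
    ultimately show ?thesis by simp
  qed
  have diag: "?P (sh k k t)" for k t
  proof
    assume inv: "invertible (sh k k t)"
    then have t: "t \<noteq> 0" by (simp add: sh_diag_invertible_iff)
    have "f (sh k k t) = sm (\<nu> * \<delta> t / t) (Em k k)" using f_diag[OF t] phi_diag[OF t] by simp
    moreover have "sm \<nu> (dmat \<delta> (sh k k t) ** matrix_inv (sh k k t)) = sm (\<nu> * \<delta> t / t) (Em k k)"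
      using t by (simp only: dmat_sh_diag sh_diag_inv(1)[OF t]) (auto simp: sh_diag ring_mat vec_eq_iff field_simps)
    ultimately show "f (sh k k t) = sm \<nu> (dmat \<delta> (sh k k t) ** matrix_inv (sh k k t))" by simp
  qed
  have "?P g" for g
  proof (rule gen_induct[where P = ?P])
    show "?P (A ** B)" if "?P A" "?P B" for A B using mult that by blast
    show "?P A" if "row i A = 0" for A i using zero_row that by blast
    show "?P A" if "\<And>i j. i \<noteq> j \<Longrightarrow> A $ i $ j = 0" for A
      by (rule diag_induct[where P = ?P]) (use mult diag that in blast)+
    show "?P (sh i j c)" if "i \<noteq> j" for i j c using shear that by blast
  qed
  then show ?thesis by (auto simp: mat_sm)
qed


end
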